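(* Let $\Gamma_n=\{P_1,\ldots,P_k\}$ with $k\ge 3$ and let $Q$ be a minimal witness of $\Gamma_n$. Then $|Q|\le n(k-1)$.
   Context: $\Gamma_n$ is a set of $k$ pairwise non-isomorphic (unlabelled) posets each of size $n$. A downset is a downward-closed subset; $D_n(Q)$ is the set of downsets of $Q$ of size $n$ up to isomorphism. $Q$ is a witness of $\Gamma_n$ if $D_n(Q)=\Gamma_n$, and a minimal witness if no proper downset of $Q$ is a witness of $\Gamma_n$. *)

theory Defs
  imports Main
begin

type_synonym 'a poset = "'a set \<times> ('a \<Rightarrow> 'a \<Rightarrow> bool)"

definition is_poset :: "'a poset \<Rightarrow> bool" where
  "is_poset P \<longleftrightarrow>
     (\<forall>x\<in>fst P. snd P x x) \<and>
     (\<forall>x\<in>fst P. \<forall>y\<in>fst P. snd P x y \<and> snd P y x \<longrightarrow> x = y) \<and>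
     (\<forall>x\<in>fst P. \<forall>y\<in>fst P. \<forall>z\<in>fst P. snd P x y \<and> snd P y z \<longrightarrow> snd P x z)"

definition poset_iso :: "'a poset \<Rightarrow> 'b poset \<Rightarrow> bool" where
  "poset_iso P R \<longleftrightarrow>
     (\<exists>f. bij_betw f (fst P) (fst R) \<and>
          (\<forall>x\<in>fst P. \<forall>y\<in>fst P. snd P x y \<longleftrightarrow> snd R (f x) (f y)))"

definition is_downset :: "'a poset \<Rightarrow> 'a set \<Rightarrow> bool" where
  "is_downset Q D \<longleftrightarrow> D \<subseteq> fst Q \<and> (\<forall>x\<in>D. \<forall>y\<in>fst Q. snd Q y x \<longrightarrow> y \<in> D)"

definition subposet :: "'a poset \<Rightarrow> 'a set \<Rightarrow> 'a poset" where
  "subposet Q D = (D, snd Q)"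

text \<open>Q is a witness of Gamma (a set of posets of size n): D_n(Q) = Gamma up to isomorphism.\<close>
definition is_witness :: "'b poset set \<Rightarrow> nat \<Rightarrow> 'a poset \<Rightarrow> bool" where
  "is_witness \<Gamma> n Q \<longleftrightarrow>
     (\<forall>D. is_downset Q D \<and> finite D \<and> card D = n \<longrightarrow> (\<exists>P\<in>\<Gamma>. poset_iso (subposet Q D) P)) \<and>
     (\<forall>P\<in>\<Gamma>. \<exists>D. is_downset Q D \<and> finite D \<and> card D = n \<and> poset_iso (subposet Q D) P)"

definition is_minimal_witness :: "'b poset set \<Rightarrow> nat \<Rightarrow> 'a poset \<Rightarrow> bool" where
  "is_minimal_witness \<Gamma> n Q \<longleftrightarrow>
     is_witness \<Gamma> n Q \<and>
     (\<forall>D. is_downset Q D \<and> D \<noteq> fst Q \<longrightarrow> \<not> is_witness \<Gamma> n (subposet Q D))"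

end

theory Submission
  imports Defs
begin

definition rlz :: "'a poset \<Rightarrow> nat \<Rightarrow> 'a set \<Rightarrow> 'b poset \<Rightarrow> bool" where
  "rlz Q n D P \<longleftrightarrow> is_downset Q D \<and> card D = n \<and> poset_iso (subposet Q D) P"

lemma exists_min:
  assumes "is_poset Q" "finite X" "X \<noteq> {}" "X \<subseteq> fst Q"
  shows "\<exists>x\<in>X. \<forall>y\<in>X. snd Q y x \<longrightarrow> y = x"
  using assms(2,3,4)
proof (induction X rule: finite_ne_induct)
  case (singleton x) then show ?case by auto
next
  case (insert x F)
  then obtain m where m: "m \<in> F" "\<forall>y\<in>F. snd Q y m \<longrightarrow> y = m" by auto
  have tr: "\<And>a b c. a \<in> fst Q \<Longrightarrow> b \<in> fst Q \<Longrightarrow> c \<in> fst Q \<Longrightarrow> snd Q a b \<Longrightarrow> snd Q b c \<Longrightarrow> snd Q a c"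
    using assms(1) unfolding is_poset_def by blast
  have an: "\<And>a b. a \<in> fst Q \<Longrightarrow> b \<in> fst Q \<Longrightarrow> snd Q a b \<Longrightarrow> snd Q b a \<Longrightarrow> a = b"
    using assms(1) unfolding is_poset_def by blast
  show ?case
  proof (cases "snd Q x m")
    case True
    have "\<forall>y\<in>insert x F. snd Q y x \<longrightarrow> y = x"
    proof (intro ballI impI)
      fix y assume y: "y \<in> insert x F" "snd Q y x"
      show "y = x"
      proof (cases "y = x")
        case False
        then have yF: "y \<in> F" using y by auto
        have "snd Q y m" using tr[of y x m] yF m(1) insert.prems True y(2) by auto
        then have "y = m" using m yF by auto
        then show ?thesis using an[of x m] True y(2) m(1) insert.prems by auto
      qed simp
    qed
    then show ?thesis by auto
  next
    case False then show ?thesis using m by auto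
  qed
qed

lemma exists_max:
  assumes "is_poset Q" "finite X" "X \<noteq> {}" "X \<subseteq> fst Q"
  shows "\<exists>x\<in>X. \<forall>y\<in>X. snd Q x y \<longrightarrow> y = x"
proof -
  have "is_poset (fst Q, \<lambda>x y. snd Q y x)" using assms(1) unfolding is_poset_def fst_conv snd_conv by blast
  then have "\<exists>x\<in>X. \<forall>y\<in>X. snd (fst Q, \<lambda>x y. snd Q y x) y x \<longrightarrow> y = x"
    using exists_min[of "(fst Q, \<lambda>x y. snd Q y x)" X] assms(2,3,4) by simp
  then show ?thesis by simp
qed

lemma card_Un_eq: "finite A \<Longrightarrow> finite B \<Longrightarrow> card (A \<union> B) = card B + card (A - B)"
proof -
  assume f: "finite A" "finite B"
  have e1: "(A \<union> B) \<inter> B = B" by blast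
  have e2: "(A \<union> B) - B = A - B" by blast
  have "finite (A \<union> B)" using f by blast
  from card_Int_Diff[OF this, of B] show ?thesis unfolding e1 e2 .
qed

lemma close_pair:
  assumes po: "is_poset Q" and fQ: "finite (fst Q)"
    and cov: "\<And>D. is_downset Q D \<Longrightarrow> card D = n \<Longrightarrow> \<exists>P\<in>\<Gamma>. rlz Q n D P"
  shows "rlz Q n A P1 \<Longrightarrow> rlz Q n B P2 \<Longrightarrow> P1 \<noteq> P2 \<Longrightarrow> P1 \<in> \<Gamma> \<Longrightarrow> P2 \<in> \<Gamma> \<Longrightarrow>
    \<exists>A' B' P1' P2'. rlz Q n A' P1' \<and> rlz Q n B' P2' \<and> P1' \<noteq> P2' \<and> P1' \<in> \<Gamma> \<and> P2' \<in> \<Gamma> \<and> card (A' - B') \<le> 1"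
proof (induction "card (A - B)" arbitrary: A P1 rule: less_induct)
  case (less A P1)
  show ?case
  proof (cases "card (A - B) \<le> 1")
    case True then show ?thesis using less.prems by (intro exI[of _ A] exI[of _ B] exI[of _ P1] exI[of _ P2]) simp
  next
    case False
    have dA: "is_downset Q A" "card A = n" and dB: "is_downset Q B" "card B = n"
      using less.prems unfolding rlz_def by auto
    have fA: "finite A" and fB: "finite B" using dA dB fQ finite_subset unfolding is_downset_def by auto
    have AB: "A - B \<noteq> {}"
    proof
      assume "A - B = {}"
      then have "card (A - B) = 0" by (simp only: card.empty)
      then show False using False by linarith
    qed
    have cAB: "card A = card (A \<inter> B) + card (A - B)" using fA by (rule card_Int_Diff)
    have cBA: "card B = card (A \<inter> B) + card (B - A)" using card_Int_Diff[OF fB, of A] by (simp add: Int_commute)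
    have eqc: "card (B - A) = card (A - B)" using cAB cBA dA dB by linarith
    have BA: "B - A \<noteq> {}"
    proof
      assume "B - A = {}"
      then have "card (B - A) = 0" by (simp only: card.empty)
      then show False using False eqc by linarith
    qed
    obtain x where x: "x \<in> A - B" "\<forall>y\<in>A - B. snd Q x y \<longrightarrow> y = x"
      using exists_max[OF po _ AB] fA dA unfolding is_downset_def by blast
    obtain y where y: "y \<in> B - A" "\<forall>z\<in>B - A. snd Q z y \<longrightarrow> z = y"
      using exists_min[OF po _ BA] fB dB unfolding is_downset_def by blast
    define A1 where "A1 = insert y (A - {x})"
    have dA1: "is_downset Q A1"
      unfolding is_downset_def
    proof (intro conjI ballI impI)
      show "A1 \<subseteq> fst Q" using dA dB y unfolding A1_def is_downset_def by auto
    next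
      fix z w assume z: "z \<in> A1" and w: "w \<in> fst Q" "snd Q w z"
      show "w \<in> A1"
      proof (cases "z = y")
        case True
        then have "w \<in> B" using w y dB unfolding is_downset_def by auto
        moreover have "w \<noteq> x" using x \<open>w \<in> B\<close> by auto
        ultimately show ?thesis using y True w unfolding A1_def by auto
      next
        case False
        then have zA: "z \<in> A" "z \<noteq> x" using z unfolding A1_def by auto
        then have "w \<in> A" using w dA unfolding is_downset_def by auto
        moreover have "w \<noteq> x"
        proof
          assume "w = x"
          show False
          proof (cases "z \<in> B")
            case True
            then have "x \<in> B" using w \<open>w = x\<close> dB unfolding is_downset_def by auto
            then show False using x by auto
          next
            case False
            then show False using x zA w \<open>w = x\<close> by auto
          qed
        qed
        ultimately show ?thesis unfolding A1_def by auto
      qed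
    qed
    have "card A > 0" using fA x card_gt_0_iff by blast
    then have cA1: "card A1 = n" using fA x y dA unfolding A1_def by auto
    obtain P where P: "P \<in> \<Gamma>" "rlz Q n A1 P" using cov[OF dA1 cA1] by auto
    have A1B: "A1 - B = (A - B) - {x}" using y unfolding A1_def by auto
    have lt: "card (A1 - B) < card (A - B)" unfolding A1B
      by (rule card_Diff1_less) (use x fA in auto)
    show ?thesis
    proof (cases "P = P2")
      case False
      show ?thesis by (rule less.hyps[OF lt P(2) less.prems(2) False P(1) less.prems(5)])
    next
      case True
      have "A - A1 = {x}" using x y unfolding A1_def by auto
      then have "card (A - A1) \<le> 1" by simp
      then show ?thesis using less.prems P True by (intro exI[of _ A] exI[of _ A1] exI[of _ P1] exI[of _ P]) simp
    qed
  qed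
qed

lemma three_types:
  assumes po: "is_poset Q" and fQ: "finite (fst Q)"
    and cov: "\<And>D. is_downset Q D \<Longrightarrow> card D = n \<Longrightarrow> \<exists>P\<in>\<Gamma>. rlz Q n D P"
    and A: "rlz Q n A P1" and B: "rlz Q n B P2" and C: "rlz Q n C P3"
    and neq: "P1 \<noteq> P2" "P1 \<noteq> P3" "P2 \<noteq> P3" and mem: "P1 \<in> \<Gamma>" "P2 \<in> \<Gamma>" "P3 \<in> \<Gamma>"
    and AB: "card (A - B) \<le> 1" and n2: "n \<ge> 2"
  shows "\<exists>D1 D2 D3 R1 R2 R3. rlz Q n D1 R1 \<and> rlz Q n D2 R2 \<and> rlz Q n D3 R3 \<and>
     R1 \<in> \<Gamma> \<and> R2 \<in> \<Gamma> \<and> R3 \<in> \<Gamma> \<and> R1 \<noteq> R2 \<and> R1 \<noteq> R3 \<and> R2 \<noteq> R3 \<and>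
     card (D1 \<union> D2 \<union> D3) \<le> 2 * n"
proof -
  have dA: "is_downset Q A" "card A = n" and dB: "is_downset Q B" "card B = n"
    and dC: "is_downset Q C" "card C = n"
    using A B C unfolding rlz_def by auto
  have fA: "finite A" and fB: "finite B" and fC: "finite C"
    using dA dB dC fQ finite_subset unfolding is_downset_def by auto
  have cAB: "card (A \<union> B) \<le> n + 1" using card_Un_eq[OF fA fB] dB AB by linarith
  show ?thesis
  proof (cases "C \<inter> (A \<union> B) = {}")
    case False
    have f2: "finite (A \<union> B)" using fA fB by blast
    have "card (C - (A \<union> B)) < card C"
      by (rule psubset_card_mono) (use fC False in auto)
    then have "card (C \<union> (A \<union> B)) \<le> 2 * n" using card_Un_eq[OF fC f2] dC cAB by linarith
    moreover have "A \<union> B \<union> C = C \<union> (A \<union> B)" by blast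
    ultimately show ?thesis using A B C neq mem
      by (intro exI[of _ A] exI[of _ B] exI[of _ C] exI[of _ P1] exI[of _ P2] exI[of _ P3]) simp
  next
    case True
    have "card A = card (A \<inter> B) + card (A - B)" using fA by (rule card_Int_Diff)
    then have "card (A \<inter> B) \<ge> 1" using dA AB n2 by linarith
    then have ABne: "A \<inter> B \<noteq> {}" by (metis card.empty not_one_le_zero)
    obtain a where a: "a \<in> A \<inter> B" "\<forall>y\<in>A \<inter> B. snd Q y a \<longrightarrow> y = a"
      using exists_min[OF po _ ABne] fA dA unfolding is_downset_def by blast
    have amin: "\<forall>y\<in>fst Q. snd Q y a \<longrightarrow> y = a"
      using a dA(1) dB(1) unfolding is_downset_def by blast
    have Cne: "C \<noteq> {}" using dC n2 by (metis card.empty not_numeral_le_zero)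
    obtain c where c: "c \<in> C" "\<forall>y\<in>C. snd Q c y \<longrightarrow> y = c"
      using exists_max[OF po fC Cne] dC unfolding is_downset_def by blast
    have aC: "a \<notin> C" using True a by blast
    define E where "E = insert a (C - {c})"
    have dE: "is_downset Q E"
      unfolding is_downset_def
    proof (intro conjI ballI impI)
      show "E \<subseteq> fst Q" using dC(1) dA(1) a unfolding E_def is_downset_def by blast
    next
      fix z w assume z: "z \<in> E" and w: "w \<in> fst Q" "snd Q w z"
      show "w \<in> E"
      proof (cases "z = a")
        case True
        then show ?thesis using amin w unfolding E_def by blast
      next
        case False
        then have zC: "z \<in> C" "z \<noteq> c" using z unfolding E_def by auto
        then have wC: "w \<in> C" using w dC(1) unfolding is_downset_def by blast
        have "w \<noteq> c"
        proof
          assume "w = c"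
          then have "z = c" using c zC w by blast
          then show False using zC by blast
        qed
        then show ?thesis using wC unfolding E_def by blast
      qed
    qed
    have "card (C - {c}) = n - 1" using c fC dC by simp
    then have cE: "card E = n" using aC fC n2 unfolding E_def by simp
    obtain P where P: "P \<in> \<Gamma>" "rlz Q n E P" using cov[OF dE cE] by blast
    have fE: "finite E" using fC unfolding E_def by blast
    have cCm: "card (C - {c}) = n - 1" using c fC dC by simp
    show ?thesis
    proof (cases "P = P1")
      case True
      have "E \<union> B \<union> C = C \<union> B" using a c unfolding E_def by blast
      moreover have "card (C \<union> B) \<le> 2 * n" using card_Un_le[of C B] dB dC by linarith
      ultimately show ?thesis using P True B C neq mem
        by (intro exI[of _ E] exI[of _ B] exI[of _ C] exI[of _ P1] exI[of _ P2] exI[of _ P3]) simp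
    next
      case F1: False
      show ?thesis
      proof (cases "P = P2")
        case True
        have "A \<union> E \<union> C = C \<union> A" using a c unfolding E_def by blast
        moreover have "card (C \<union> A) \<le> 2 * n" using card_Un_le[of C A] dA dC by linarith
        ultimately show ?thesis using P True A C neq mem
          by (intro exI[of _ A] exI[of _ E] exI[of _ C] exI[of _ P1] exI[of _ P2] exI[of _ P3]) simp
      next
        case False
        have "A \<union> B \<union> E = (A \<union> B) \<union> (C - {c})" using a unfolding E_def by blast
        moreover have "card ((A \<union> B) \<union> (C - {c})) \<le> 2 * n"
          using card_Un_le[of "A \<union> B" "C - {c}"] cAB cCm n2 by linarith
        ultimately show ?thesis using P False F1 A B neq mem
          by (intro exI[of _ A] exI[of _ B] exI[of _ E] exI[of _ P1] exI[of _ P2] exI[of _ P]) simp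
      qed
    qed
  qed
qed

theorem mainTheorem12:
  fixes \<Gamma> :: "'b poset set" and Q :: "'a poset" and n k :: nat
  assumes "finite \<Gamma>" and "card \<Gamma> = k" and "k \<ge> 3"
    and "\<forall>P\<in>\<Gamma>. is_poset P \<and> finite (fst P) \<and> card (fst P) = n"
    and "\<forall>P\<in>\<Gamma>. \<forall>R\<in>\<Gamma>. P \<noteq> R \<longrightarrow> \<not> poset_iso P R"
    and "is_poset Q" and "finite (fst Q)"
    and "is_minimal_witness \<Gamma> n Q"
  shows "card (fst Q) \<le> n * (k - 1)"
proof -
  have W: "is_witness \<Gamma> n Q" and Min: "\<forall>D. is_downset Q D \<and> D \<noteq> fst Q \<longrightarrow> \<not> is_witness \<Gamma> n (subposet Q D)"
    using assms(8) unfolding is_minimal_witness_def by auto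
  have finD: "\<And>D. is_downset Q D \<Longrightarrow> finite D"
    using assms(7) finite_subset unfolding is_downset_def by blast
  have cov: "\<And>D. is_downset Q D \<Longrightarrow> card D = n \<Longrightarrow> \<exists>P\<in>\<Gamma>. rlz Q n D P"
    using W finD unfolding is_witness_def rlz_def by blast
  have real: "\<And>P. P \<in> \<Gamma> \<Longrightarrow> \<exists>D. rlz Q n D P"
    using W unfolding is_witness_def rlz_def by blast
  have two: "\<exists>P R. P \<in> \<Gamma> \<and> R \<in> \<Gamma> \<and> P \<noteq> R"
  proof -
    have "\<Gamma> \<noteq> {}" using assms(2,3) by auto
    then obtain P where P: "P \<in> \<Gamma>" by blast
    have "card (\<Gamma> - {P}) = k - 1" using assms(1,2) P by simp
    then have "\<Gamma> - {P} \<noteq> {}"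
    proof (intro notI)
      assume "card (\<Gamma> - {P}) = k - 1" "\<Gamma> - {P} = {}"
      then have "k - 1 = 0" by simp
      then show False using assms(3) by linarith
    qed
    then obtain R where "R \<in> \<Gamma> - {P}" by blast
    then show ?thesis using P by blast
  qed
  have n2: "n \<ge> 2"
  proof (rule ccontr)
    assume "\<not> n \<ge> 2"
    then have n1: "n = 0 \<or> n = 1" by linarith
    have iso: "poset_iso P R" if PR: "P \<in> \<Gamma>" "R \<in> \<Gamma>" for P R
    proof -
      have pP: "is_poset P" "finite (fst P)" "card (fst P) = n"
        and pR: "is_poset R" "finite (fst R)" "card (fst R) = n" using assms(4) PR by auto
      show ?thesis
      proof (cases "n = 0")
        case True
        then have "fst P = {}" "fst R = {}" using pP pR by auto
        then show ?thesis unfolding poset_iso_def by (intro exI[of _ id]) simp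
      next
        case False
        then have "n = 1" using n1 by simp
        then obtain p r where p: "fst P = {p}" and r: "fst R = {r}" using pP pR card_1_singletonE by metis
        have "snd P p p" "snd R r r" using pP(1) pR(1) p r unfolding is_poset_def by auto
        then show ?thesis unfolding poset_iso_def p r
          by (intro exI[of _ "\<lambda>_. r"]) (simp add: bij_betw_def)
      qed
    qed
    from two obtain P R where "P \<in> \<Gamma>" "R \<in> \<Gamma>" "P \<noteq> R" by blast
    then show False using iso assms(5) by blast
  qed
  from two obtain P1 P2 where P12: "P1 \<in> \<Gamma>" "P2 \<in> \<Gamma>" "P1 \<noteq> P2" by blast
  obtain A0 where A0: "rlz Q n A0 P1" using real P12 by blast
  obtain B0 where B0: "rlz Q n B0 P2" using real P12 by blast
  obtain A B Q1 Q2 where AB: "rlz Q n A Q1" "rlz Q n B Q2" "Q1 \<noteq> Q2" "Q1 \<in> \<Gamma>" "Q2 \<in> \<Gamma>" "card (A - B) \<le> 1"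
    using close_pair[OF assms(6,7) cov A0 B0 P12(3) P12(1,2)] by blast
  have "card (\<Gamma> - {Q1, Q2}) = k - 2" using assms(1,2) AB(3,4,5) by (simp add: card_Diff_subset)
  then have "\<Gamma> - {Q1, Q2} \<noteq> {}"
  proof (intro notI)
    assume "card (\<Gamma> - {Q1, Q2}) = k - 2" "\<Gamma> - {Q1, Q2} = {}"
    then have "k - 2 = 0" by simp
    then show False using assms(3) by linarith
  qed
  then obtain Q3 where Q3: "Q3 \<in> \<Gamma>" "Q3 \<noteq> Q1" "Q3 \<noteq> Q2" by blast
  obtain C where C: "rlz Q n C Q3" using real Q3 by blast
  obtain D1 D2 D3 R1 R2 R3 where T: "rlz Q n D1 R1" "rlz Q n D2 R2" "rlz Q n D3 R3"
     "R1 \<in> \<Gamma>" "R2 \<in> \<Gamma>" "R3 \<in> \<Gamma>" "R1 \<noteq> R2" "R1 \<noteq> R3" "R2 \<noteq> R3"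
     and cT: "card (D1 \<union> D2 \<union> D3) \<le> 2 * n"
    using three_types[OF assms(6,7) cov AB(1,2) C AB(3) Q3(2)[symmetric] Q3(3)[symmetric] AB(4,5) Q3(1) AB(6) n2]
    by blast
  define Rf :: "'b poset \<Rightarrow> 'a set" where "Rf P = (SOME D. rlz Q n D P)" for P
  have Rf: "rlz Q n (Rf P) P" if "P \<in> \<Gamma>" for P
    unfolding Rf_def using real[OF that] by (rule someI_ex)
  define G where "G = \<Gamma> - {R1, R2, R3}"
  have cG: "card G = k - 3" unfolding G_def using assms(1,2) T(4-9) by (simp add: card_Diff_subset)
  define U where "U = D1 \<union> D2 \<union> D3 \<union> (\<Union>P\<in>G. Rf P)"
  have finG: "finite G" using assms(1) unfolding G_def by blast
  have "card (\<Union>P\<in>G. Rf P) \<le> (\<Sum>P\<in>G. card (Rf P))" using card_UN_le[OF finG] by blast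
  also have "\<dots> = (\<Sum>P\<in>G. n)" using Rf unfolding G_def rlz_def by (intro sum.cong) auto
  also have "\<dots> = n * (k - 3)" using cG by simp
  finally have cUG: "card (\<Union>P\<in>G. Rf P) \<le> n * (k - 3)" .
  have "card U \<le> card (D1 \<union> D2 \<union> D3) + card (\<Union>P\<in>G. Rf P)"
    unfolding U_def by (rule card_Un_le)
  also have "\<dots> \<le> 2 * n + n * (k - 3)" using cT cUG by linarith
  also have "\<dots> = n * (k - 1)"
  proof -
    have "k - 1 = (k - 3) + 2" using assms(3) by linarith
    then show ?thesis by (simp add: algebra_simps)
  qed
  finally have cU: "card U \<le> n * (k - 1)" .
  have dns: "is_downset Q D1" "is_downset Q D2" "is_downset Q D3" using T unfolding rlz_def by auto
  have dG: "\<forall>P\<in>G. is_downset Q (Rf P)" using Rf unfolding G_def rlz_def by auto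
  have dU: "is_downset Q U"
    using dns dG unfolding U_def is_downset_def by blast
  have reU: "\<forall>P\<in>\<Gamma>. \<exists>D. rlz Q n D P \<and> D \<subseteq> U"
  proof
    fix P assume P: "P \<in> \<Gamma>"
    show "\<exists>D. rlz Q n D P \<and> D \<subseteq> U"
    proof (cases "P \<in> G")
      case True
      then show ?thesis using Rf P unfolding U_def by blast
    next
      case False
      then have "P = R1 \<or> P = R2 \<or> P = R3" using P unfolding G_def by blast
      then show ?thesis using T unfolding U_def by blast
    qed
  qed
  have sub_down: "is_downset (subposet Q U) D \<longleftrightarrow> is_downset Q D \<and> D \<subseteq> U" for D
    using dU unfolding is_downset_def subposet_def by auto
  have ss: "subposet (subposet Q U) D = subposet Q D" for D unfolding subposet_def by simp
  have "is_witness \<Gamma> n (subposet Q U)"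
    unfolding is_witness_def sub_down ss
  proof (intro conjI allI ballI impI)
    fix D assume "(is_downset Q D \<and> D \<subseteq> U) \<and> finite D \<and> card D = n"
    then show "\<exists>P\<in>\<Gamma>. poset_iso (subposet Q D) P" using cov unfolding rlz_def by blast
  next
    fix P assume "P \<in> \<Gamma>"
    then obtain D where "rlz Q n D P" "D \<subseteq> U" using reU by blast
    then show "\<exists>D. (is_downset Q D \<and> D \<subseteq> U) \<and> finite D \<and> card D = n \<and> poset_iso (subposet Q D) P"
      using finD unfolding rlz_def by blast
  qed
  then have "U = fst Q" using Min dU by blast
  then show ?thesis using cU by simp
qed

end
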